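(* Let $P\subseteq M_{\mathbb R}$ be an $n$-dimensional reflexive polytope and let $\Lambda:=\Lambda_{n-2}$ be the sublattice of $M$ generated by all lattice points lying in faces of $P$ of dimension $n-2$. Let $x\in\mathcal R\setminus\Lambda$ and let $y\in\partial P\cap\Lambda$ with $y\notin\mathcal F_x$. Then $\langle\eta_x,y\rangle\ge 1$, and the point $p(x,y):=\langle\eta_x,y\rangle\,x+y$ lies in $\mathcal R\setminus\Lambda$ and is a root orthogonal to $x$, i.e. $\langle\eta_x,p(x,y)\rangle=0=\langle\eta_{p(x,y)},x\rangle$.
   Context: $M\cong\mathbb Z^n$ is a lattice, $N=\mathrm{Hom}_{\mathbb Z}(M,\mathbb Z)$ its dual with pairing $\langle\cdot,\cdot\rangle$. A reflexive polytope is an $n$-dimensional lattice polytope $P\subseteq M_{\mathbb R}$ containing the origin in its interior such that the dual polytope $P^*=\{u\in N_{\mathbb R}:\langle u,m\rangle\ge-1\ \forall m\in P\}$ has vertices in $N$; equivalently every facet $F$ of $P$ equals $\{m\in P:\langle\eta_F,m\rangle=-1\}$ for a unique $\eta_F\in N$ with $\langle \eta_F,\cdot\rangle\ge -1$ on $P$. $\partial P$ is the boundary of $P$. $\mathcal R$ (the set of Demazure roots of $P$) is the set of lattice points of $M$ lying in the relative interior of some facet of $P$. For $x\in\mathcal R$, $\mathcal F_x$ denotes the unique facet of $P$ containing $x$, and $\eta_x:=\eta_{\mathcal F_x}\in N$ is its inner normal, so $\langle\eta_x,\mathcal F_x\rangle=-1$. Two roots $x,y\in\mathcal R$ are called orthogonal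 if $\langle\eta_x,y\rangle=0=\langle\eta_y,x\rangle$. *)

theory Defs
  imports "HOL-Analysis.Analysis"
begin

text \<open>We identify M with the integer points of real^'n, and N with the integer
points of real^'n as well, the pairing being the standard inner product.\<close>

definition lattice_pt :: "real^'n \<Rightarrow> bool" where
  "lattice_pt v \<longleftrightarrow> (\<forall>i. v $ i \<in> \<int>)"

definition lattice_polytope :: "(real^'n) set \<Rightarrow> bool" where
  "lattice_polytope P \<longleftrightarrow> (\<exists>S. finite S \<and> (\<forall>v\<in>S. lattice_pt v) \<and> P = convex hull S)"

definition reflexive :: "(real^'n) set \<Rightarrow> bool" where
  "reflexive P \<longleftrightarrow> lattice_polytope P \<and> aff_dim P = int CARD('n) \<and> 0 \<in> interior P \<and>
     (\<forall>F. F facet_of P \<longrightarrow> (\<exists>!\<eta>. lattice_pt \<eta> \<and> (\<forall>m\<in>P. \<eta> \<bullet> m \<ge> -1) \<and>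
                                   F = {m\<in>P. \<eta> \<bullet> m = -1}))"

definition inner_normal :: "(real^'n) set \<Rightarrow> (real^'n) set \<Rightarrow> real^'n" where
  "inner_normal P F = (THE \<eta>. lattice_pt \<eta> \<and> (\<forall>m\<in>P. \<eta> \<bullet> m \<ge> -1) \<and> F = {m\<in>P. \<eta> \<bullet> m = -1})"

definition roots :: "(real^'n) set \<Rightarrow> (real^'n) set" where
  "roots P = {x. lattice_pt x \<and> (\<exists>F. F facet_of P \<and> x \<in> rel_interior F)}"

definition facet_at :: "(real^'n) set \<Rightarrow> real^'n \<Rightarrow> (real^'n) set" where
  "facet_at P x = (THE F. F facet_of P \<and> x \<in> F)"

definition eta :: "(real^'n) set \<Rightarrow> real^'n \<Rightarrow> real^'n" where
  "eta P x = inner_normal P (facet_at P x)"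

definition int_span :: "(real^'n) set \<Rightarrow> (real^'n) set" where
  "int_span G = {v. \<exists>S c. finite S \<and> S \<subseteq> G \<and> (\<forall>s\<in>S. c s \<in> \<int>) \<and> v = (\<Sum>s\<in>S. c s *\<^sub>R s)}"

definition Lambda :: "(real^'n) set \<Rightarrow> (real^'n) set" where
  "Lambda P = int_span {v. lattice_pt v \<and> (\<exists>F. F face_of P \<and> aff_dim F = int CARD('n) - 2 \<and> v \<in> F)}"

end

theory Submission
  imports Defs
begin


lemma refl_polytope: assumes "reflexive P" shows "polytope P"
  using assms unfolding reflexive_def lattice_polytope_def polytope_def by blast

lemma refl_polyhedron: assumes "reflexive P" shows "polyhedron P"
  using refl_polytope[OF assms] polytope_imp_polyhedron by blast

lemma normal_props:
  assumes "reflexive P" "H facet_of P"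
  shows "lattice_pt (inner_normal P H) \<and> (\<forall>m\<in>P. inner_normal P H \<bullet> m \<ge> -1) \<and>
         H = {m\<in>P. inner_normal P H \<bullet> m = -1}"
proof -
  from assms have "\<exists>!\<eta>. lattice_pt \<eta> \<and> (\<forall>m\<in>P. \<eta> \<bullet> m \<ge> -1) \<and> H = {m\<in>P. \<eta> \<bullet> m = -1}"
    unfolding reflexive_def by blast
  from theI'[OF this] show ?thesis unfolding inner_normal_def .
qed

lemma lattice_inner_int:
  assumes "lattice_pt a" "lattice_pt (b::real^'n)" shows "a \<bullet> b \<in> \<int>"
  using assms unfolding lattice_pt_def inner_vec_def
  by (intro Ints_sum Ints_mult) auto

lemma lattice_add: "lattice_pt a \<Longrightarrow> lattice_pt b \<Longrightarrow> lattice_pt (a + b)"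
  unfolding lattice_pt_def by auto

lemma lattice_scale: "lattice_pt a \<Longrightarrow> c \<in> \<int> \<Longrightarrow> lattice_pt (c *\<^sub>R a)"
  unfolding lattice_pt_def by auto

lemma int_span_lattice:
  assumes "\<forall>v\<in>G. lattice_pt v" "v \<in> int_span G" shows "lattice_pt v"
proof -
  from assms(2) obtain S c where "finite S" "S \<subseteq> G" "\<forall>s\<in>S. c s \<in> \<int>" "v = (\<Sum>s\<in>S. c s *\<^sub>R s)"
    unfolding int_span_def by blast
  then show ?thesis using assms(1) unfolding lattice_pt_def
    by (auto intro!: Ints_sum Ints_mult simp: sum_component)
qed

lemma int_span_gen: "v \<in> G \<Longrightarrow> v \<in> int_span G"
  unfolding int_span_def
  by (rule CollectI, rule exI[of _ "{v}"], rule exI[of _ "\<lambda>_. 1"]) auto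

lemma int_span_diff:
  assumes "a \<in> int_span G" "b \<in> int_span G" shows "a - b \<in> int_span G"
proof -
  from assms(1) obtain S c where S: "finite S" "S \<subseteq> G" "\<forall>s\<in>S. c s \<in> \<int>" "a = (\<Sum>s\<in>S. c s *\<^sub>R s)"
    unfolding int_span_def by blast
  from assms(2) obtain T d where T: "finite T" "T \<subseteq> G" "\<forall>s\<in>T. d s \<in> \<int>" "b = (\<Sum>s\<in>T. d s *\<^sub>R s)"
    unfolding int_span_def by blast
  define e where "e s = (if s \<in> S then c s else 0) - (if s \<in> T then d s else 0)" for s
  have "a = (\<Sum>s\<in>S \<union> T. (if s \<in> S then c s else 0) *\<^sub>R s)"
  proof -
    have "(\<Sum>s\<in>S \<union> T. (if s \<in> S then c s else 0) *\<^sub>R s) = (\<Sum>s\<in>S. (if s \<in> S then c s else 0) *\<^sub>R s)"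
      using S T by (intro sum.mono_neutral_right) auto
    then show ?thesis using S by simp
  qed
  moreover have "b = (\<Sum>s\<in>S \<union> T. (if s \<in> T then d s else 0) *\<^sub>R s)"
  proof -
    have "(\<Sum>s\<in>S \<union> T. (if s \<in> T then d s else 0) *\<^sub>R s) = (\<Sum>s\<in>T. (if s \<in> T then d s else 0) *\<^sub>R s)"
      using S T by (intro sum.mono_neutral_right) auto
    then show ?thesis using T by simp
  qed
  ultimately have "a - b = (\<Sum>s\<in>S \<union> T. e s *\<^sub>R s)"
    unfolding e_def by (simp add: sum_subtractf scaleR_diff_left)
  moreover have "\<forall>s\<in>S \<union> T. e s \<in> \<int>" using S T unfolding e_def by auto
  ultimately show ?thesis unfolding int_span_def using S T
    by (intro CollectI exI[of _ "S \<union> T"] exI[of _ e]) auto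
qed

lemma int_span_zero: "0 \<in> int_span G"
  unfolding int_span_def by (rule CollectI, rule exI[of _ "{}"]) auto

lemma int_span_add:
  assumes "a \<in> int_span G" "b \<in> int_span G" shows "a + b \<in> int_span G"
proof -
  have "0 - b \<in> int_span G" by (rule int_span_diff[OF int_span_zero assms(2)])
  from int_span_diff[OF assms(1) this] show ?thesis by simp
qed

lemma int_span_nat_mult:
  assumes "a \<in> int_span G" shows "real k *\<^sub>R a \<in> int_span G"
  by (induction k) (auto simp: int_span_zero algebra_simps intro: int_span_add assms)



lemma refl_frontier_rel: assumes "reflexive P" shows "frontier P = rel_frontier P"
proof -
  have "interior P \<noteq> {}" using assms unfolding reflexive_def by blast
  then show ?thesis unfolding frontier_def rel_frontier_def
    by (simp add: rel_interior_nonempty_interior)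
qed

lemma frontier_in_facet:
  assumes "reflexive P" "y \<in> frontier P" shows "\<exists>H. H facet_of P \<and> y \<in> H"
  using assms refl_frontier_rel[OF assms(1)] rel_frontier_of_polyhedron[OF refl_polyhedron[OF assms(1)]]
  by auto

lemma facets_subset_eq:
  assumes "convex P" "F facet_of P" "G facet_of P" "F \<subseteq> G" shows "F = G"
proof (rule ccontr)
  assume ne: "F \<noteq> G"
  have "F face_of G" by (rule face_of_subset[OF facet_of_imp_face_of[OF assms(2)] assms(4) facet_of_imp_subset[OF assms(3)]])
  moreover have "convex G" using assms(3) face_of_imp_convex facet_of_imp_face_of by blast
  ultimately have "aff_dim F < aff_dim G" using face_of_aff_dim_lt ne by blast
  then show False using assms(2,3) unfolding facet_of_def by simp
qed

lemma two_facets_Lambda: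
  assumes "reflexive P" "F facet_of P" "H facet_of P" "F \<noteq> H" "z \<in> F" "z \<in> H" "lattice_pt z"
  shows "z \<in> Lambda P"
proof -
  have cP: "convex P" using refl_polytope[OF assms(1)] polytope_imp_convex by blast
  have pP: "polyhedron P" using refl_polyhedron[OF assms(1)] .
  have FP: "F face_of P" and HP: "H face_of P" using assms facet_of_imp_face_of by auto
  have "(F \<inter> H) face_of P" using face_of_Int FP HP by blast
  then have fi: "(F \<inter> H) face_of F" using face_of_subset[of "F \<inter> H" P F] facet_of_imp_subset[OF assms(2)] by blast
  have neq: "F \<inter> H \<noteq> F"
  proof
    assume "F \<inter> H = F" then have "F \<subseteq> H" by blast
    then show False using facets_subset_eq[OF cP assms(2,3)] assms(4) by blast
  qed
  have "polyhedron F" using face_of_polyhedron_polyhedron pP FP by blast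
  then obtain G where G: "G facet_of F" "F \<inter> H \<subseteq> G"
    using face_of_polyhedron_subset_facet fi neq assms(5,6) by blast
  have "G face_of P" using face_of_trans facet_of_imp_face_of G(1) FP by blast
  moreover have "aff_dim G = int CARD('a) - 2"
    using G(1) assms(1,2) unfolding facet_of_def reflexive_def by simp
  moreover have "z \<in> G" using G assms(5,6) by blast
  ultimately show ?thesis unfolding Lambda_def using assms(7)
    by (intro int_span_gen) blast
qed

lemma root_facet_unique:
  assumes "reflexive P" "F facet_of P" "x \<in> rel_interior F" "G facet_of P" "x \<in> G"
  shows "G = F"
proof -
  have cP: "convex P" using refl_polytope[OF assms(1)] polytope_imp_convex by blast
  have "(F \<inter> G) face_of P" using face_of_Int[OF facet_of_imp_face_of[OF assms(2)] facet_of_imp_face_of[OF assms(4)]] .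
  then have fi: "(F \<inter> G) face_of F" using face_of_subset[of "F \<inter> G" P F] facet_of_imp_subset[OF assms(2)] by blast
  have "F \<inter> G = F"
  proof (rule ccontr)
    assume "F \<inter> G \<noteq> F"
    then have "F \<inter> G \<subseteq> rel_frontier F" using face_of_subset_rel_frontier fi by blast
    moreover have "x \<in> F \<inter> G" using assms(3,5) rel_interior_subset[of F] by blast
    ultimately show False using assms(3) unfolding rel_frontier_def by blast
  qed
  then have "F \<subseteq> G" by blast
  then show ?thesis using facets_subset_eq[OF cP assms(2,4)] by simp
qed

lemma facet_at_eq:
  assumes "G facet_of P" "x \<in> G" "\<And>H. H facet_of P \<Longrightarrow> x \<in> H \<Longrightarrow> H = G"
  shows "facet_at P x = G"
  unfolding facet_at_def
proof (rule the_equality)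
  show "G facet_of P \<and> x \<in> G" using assms(1,2) by blast
  fix H assume "H facet_of P \<and> x \<in> H" then show "H = G" using assms(3) by blast
qed

lemma unique_facet_rel_interior:
  assumes "reflexive P" "H facet_of P" "p \<in> H" "\<And>G. G facet_of P \<Longrightarrow> p \<in> G \<Longrightarrow> G = H"
  shows "p \<in> rel_interior H"
proof (rule ccontr)
  assume nr: "p \<notin> rel_interior H"
  have pP: "polyhedron P" using refl_polyhedron[OF assms(1)] .
  have HP: "H face_of P" using assms(2) facet_of_imp_face_of by blast
  have pH: "polyhedron H" using face_of_polyhedron_polyhedron pP HP by blast
  have "p \<in> rel_frontier H" using nr assms(3) closure_subset unfolding rel_frontier_def by blast
  then obtain G where G: "G facet_of H" "p \<in> G" using rel_frontier_of_polyhedron[OF pH] by blast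
  have GP: "G face_of P" using face_of_trans[OF facet_of_imp_face_of[OF G(1)] HP] .
  have adG: "aff_dim G = aff_dim H - 1" using G(1) unfolding facet_of_def by simp
  have adH: "aff_dim H = aff_dim P - 1" using assms(2) unfolding facet_of_def by simp
  have GneP: "G \<noteq> P" using adG adH by auto
  have "G \<noteq> {}" using G by blast
  then have Geq: "G = \<Inter>{F. F facet_of P \<and> G \<subseteq> F}" using face_of_polyhedron[OF pP GP _ GneP] by blast
  have "H \<subseteq> \<Inter>{F. F facet_of P \<and> G \<subseteq> F}"
  proof (rule Inter_greatest)
    fix F assume "F \<in> {F. F facet_of P \<and> G \<subseteq> F}"
    then have "F facet_of P" "p \<in> F" using G(2) by auto
    then show "H \<subseteq> F" using assms(4) by blast
  qed
  then have "H \<subseteq> G" by (simp only: Geq[symmetric])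
  then have "G = H" using G(1) facet_of_imp_subset by blast
  then show False using adG by simp
qed

lemma halfspaces_in_P:
  assumes "reflexive P" "\<And>H. H facet_of P \<Longrightarrow> inner_normal P H \<bullet> m \<ge> -1"
  shows "m \<in> P"
proof (rule ccontr)
  assume mP: "m \<notin> P"
  have intP: "0 \<in> interior P" using assms(1) unfolding reflexive_def by blast
  have clP: "closed P" using refl_polytope[OF assms(1)] polytope_imp_closed by blast
  have "0 \<in> P" using intP interior_subset by blast
  have "closed_segment 0 m \<inter> frontier P \<noteq> {}"
    using connected_Int_frontier[of "closed_segment 0 m" P] \<open>0 \<in> P\<close> mP by auto
  then obtain q where q: "q \<in> closed_segment 0 m" "q \<in> frontier P" by blast
  then obtain u where u: "0 \<le> u" "u \<le> 1" "q = u *\<^sub>R m" by (auto simp: in_segment)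
  have "q \<noteq> 0" using q(2) intP unfolding frontier_def by blast
  then have "u \<noteq> 0" using u by auto
  have "q \<in> P" using q(2) clP frontier_subset_closed by blast
  then have "u \<noteq> 1" using u mP by auto
  obtain H where H: "H facet_of P" "q \<in> H" using frontier_in_facet[OF assms(1) q(2)] by blast
  have "inner_normal P H \<bullet> q = -1" using normal_props[OF assms(1) H(1)] H(2) by blast
  then have e: "u * (inner_normal P H \<bullet> m) = -1" using u(3) by simp
  have "inner_normal P H \<bullet> m \<ge> -1" using assms(2) H(1) by blast
  then have "u * (inner_normal P H \<bullet> m) \<ge> u * (-1)" using u by (intro mult_left_mono) auto
  moreover have "u * (-1) > -1" using u \<open>u \<noteq> 1\<close> by auto
  ultimately show False using e by linarith
qed



lemma int_gt_m1: "(r::real) \<in> \<int> \<Longrightarrow> r > -1 \<Longrightarrow> r \<ge> 0"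
  by (elim Ints_cases) simp

lemma int_gt_0: "(r::real) \<in> \<int> \<Longrightarrow> r > 0 \<Longrightarrow> r \<ge> 1"
  by (elim Ints_cases) simp

lemma int_span_int_mult:
  assumes "a \<in> int_span G" "c \<in> \<int>" shows "c *\<^sub>R a \<in> int_span G"
proof -
  obtain i where i: "c = of_int i" using assms(2) by (elim Ints_cases)
  show ?thesis
  proof (cases "i \<ge> 0")
    case True
    then have "c = real (nat i)" using i by simp
    then show ?thesis using int_span_nat_mult[OF assms(1)] by simp
  next
    case False
    then have "c = 0 - real (nat (-i))" using i by simp
    then have "c *\<^sub>R a = 0 - real (nat (-i)) *\<^sub>R a" by (simp add: scaleR_diff_left)
    then show ?thesis using int_span_diff[OF int_span_zero int_span_nat_mult[OF assms(1)]] by simp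
  qed
qed

lemma bounded_ray_zero:
  fixes p :: "'a::real_normed_vector"
  assumes "bounded P" "\<And>s. s \<ge> 0 \<Longrightarrow> s *\<^sub>R p \<in> P" shows "p = 0"
proof (rule ccontr)
  assume np: "p \<noteq> 0"
  obtain B where B: "\<And>v. v \<in> P \<Longrightarrow> norm v \<le> B" using assms(1) bounded_iff by blast
  have "0 \<in> P" using assms(2)[of 0] by simp
  then have "B \<ge> 0" using B[of 0] by simp
  define s where "s = (B + 1) / norm p"
  have "s \<ge> 0" unfolding s_def using \<open>B \<ge> 0\<close> by simp
  have "norm (s *\<^sub>R p) = B + 1" unfolding s_def using np \<open>B \<ge> 0\<close> by simp
  then show False using B[OF assms(2)[OF \<open>s \<ge> 0\<close>]] by simp
qed


theorem mainTheorem2: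
  fixes P :: "(real^'n) set" and x y :: "real^'n"
  assumes "reflexive P"
    and "x \<in> roots P" and "x \<notin> Lambda P"
    and "y \<in> frontier P" and "y \<in> Lambda P" and "y \<notin> facet_at P x"
  shows "eta P x \<bullet> y \<ge> 1 \<and>
         (let p = (eta P x \<bullet> y) *\<^sub>R x + y in
            p \<in> roots P \<and> p \<notin> Lambda P \<and>
            eta P x \<bullet> p = 0 \<and> eta P p \<bullet> x = 0)"
proof -
  note R = assms(1)
  define nu where "nu G = inner_normal P G" for G
  have nuP: "\<And>G. G facet_of P \<Longrightarrow> lattice_pt (nu G) \<and> (\<forall>m\<in>P. nu G \<bullet> m \<ge> -1) \<and> G = {m\<in>P. nu G \<bullet> m = -1}"
    unfolding nu_def using normal_props[OF R] by blast
  have hs: "\<And>m. (\<And>G. G facet_of P \<Longrightarrow> nu G \<bullet> m \<ge> -1) \<Longrightarrow> m \<in> P"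
    unfolding nu_def using halfspaces_in_P[OF R] by blast
  have clP: "closed P" using refl_polytope[OF R] polytope_imp_closed by blast
  have bdP: "bounded P" using refl_polytope[OF R] polytope_imp_bounded by blast
  have fin: "finite {G. G facet_of P}" using finite_polyhedron_facets refl_polyhedron[OF R] by blast
  have genlat: "\<forall>v\<in>{v. lattice_pt v \<and> (\<exists>F. F face_of P \<and> aff_dim F = int CARD('n) - 2 \<and> v \<in> F)}. lattice_pt v"
    by blast
  have latL: "\<And>v. v \<in> Lambda P \<Longrightarrow> lattice_pt v"
    unfolding Lambda_def using int_span_lattice[OF genlat] by blast
  from assms(2) obtain F0 where F0: "F0 facet_of P" "x \<in> rel_interior F0" and latx: "lattice_pt x"
    unfolding roots_def by blast
  have xF0: "x \<in> F0" using F0(2) rel_interior_subset by blast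
  have fx: "facet_at P x = F0"
    using facet_at_eq[OF F0(1) xF0] root_facet_unique[OF R F0] by blast
  have etax: "eta P x = nu F0" unfolding eta_def fx nu_def ..
  define \<eta> where "\<eta> = nu F0"
  have eta1: "\<eta> \<bullet> x = -1" using nuP[OF F0(1)] xF0 unfolding \<eta>_def by blast
  have aG: "\<And>G. G facet_of P \<Longrightarrow> G \<noteq> F0 \<Longrightarrow> nu G \<bullet> x \<ge> 0 \<and> nu G \<bullet> x \<in> \<int>"
  proof -
    fix G assume G: "G facet_of P" "G \<noteq> F0"
    have xP: "x \<in> P" using xF0 F0(1) facet_of_imp_subset by blast
    have i: "nu G \<bullet> x \<in> \<int>" using lattice_inner_int nuP[OF G(1)] latx by blast
    have "x \<notin> G" using root_facet_unique[OF R F0 G(1)] G(2) by blast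
    then have "nu G \<bullet> x \<noteq> -1" using nuP[OF G(1)] xP by blast
    moreover have "nu G \<bullet> x \<ge> -1" using nuP[OF G(1)] xP by blast
    ultimately show "nu G \<bullet> x \<ge> 0 \<and> nu G \<bullet> x \<in> \<int>" using int_gt_m1[OF i] i by auto
  qed
  have laty: "lattice_pt y" using latL assms(5) .
  have yP: "y \<in> P" using assms(4) clP frontier_subset_closed by blast
  have bG: "\<And>G. G facet_of P \<Longrightarrow> nu G \<bullet> y \<ge> -1 \<and> nu G \<bullet> y \<in> \<int>"
    using nuP yP lattice_inner_int laty by blast
  have yG: "\<And>G. G facet_of P \<Longrightarrow> y \<in> G \<longleftrightarrow> nu G \<bullet> y = -1"
    using nuP yP by blast
  have bG0: "\<And>G. G facet_of P \<Longrightarrow> y \<notin> G \<Longrightarrow> nu G \<bullet> y \<ge> 0"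
    using bG yG int_gt_m1 by force
  define k where "k = \<eta> \<bullet> y"
  have kint: "k \<in> \<int>" unfolding k_def \<eta>_def using bG[OF F0(1)] by blast
  have yF0: "y \<notin> F0" using assms(6) fx by simp
  have k0: "k \<ge> 0" unfolding k_def \<eta>_def using bG0[OF F0(1) yF0] .
  obtain H0 where H0: "H0 facet_of P" "y \<in> H0" using frontier_in_facet[OF R assms(4)] by blast
  have H0F0: "H0 \<noteq> F0" using H0 yF0 by blast
  have two: "\<And>z G1 G2. G1 facet_of P \<Longrightarrow> G2 facet_of P \<Longrightarrow> G1 \<noteq> G2 \<Longrightarrow> z \<in> P \<Longrightarrow>
      nu G1 \<bullet> z = -1 \<Longrightarrow> nu G2 \<bullet> z = -1 \<Longrightarrow> lattice_pt z \<Longrightarrow> z \<in> Lambda P"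
  proof -
    fix z G1 G2 assume a: "G1 facet_of P" "G2 facet_of P" "G1 \<noteq> G2" "z \<in> P"
      "nu G1 \<bullet> z = -1" "nu G2 \<bullet> z = -1" "lattice_pt z"
    have "z \<in> G1" "z \<in> G2" using nuP[OF a(1)] nuP[OF a(2)] a(4,5,6) by blast+
    then show "z \<in> Lambda P" using two_facets_Lambda[OF R a(1,2,3) _ _ a(7)] by blast
  qed
  have k1: "k \<ge> 1"
  proof (rule ccontr)
    assume "\<not> k \<ge> 1"
    then have kz: "k = 0" using k0 kint int_gt_0 by force
    define A where "A = {G. G facet_of P \<and> y \<in> G}"
    have finA: "finite A" using fin unfolding A_def by (rule finite_subset[rotated]) blast
    have "H0 \<in> A" using H0 unfolding A_def by blast
    define mn where "mn = Min ((\<lambda>G. nu G \<bullet> x) ` A)"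
    have "mn \<in> (\<lambda>G. nu G \<bullet> x) ` A" unfolding mn_def using finA \<open>H0 \<in> A\<close> by (intro Min_in) auto
    then obtain H1 where H1: "H1 \<in> A" "nu H1 \<bullet> x = mn" by blast
    have mnle: "\<And>G. G \<in> A \<Longrightarrow> mn \<le> nu G \<bullet> x" unfolding mn_def using finA by (intro Min_le) auto
    have H1f: "H1 facet_of P" "y \<in> H1" using H1 unfolding A_def by blast+
    have H1F0: "H1 \<noteq> F0" using H1f yF0 by blast
    define t where "t = mn + 1"
    have tint: "t \<in> \<int>" "t \<ge> 1" unfolding t_def using aG[OF H1f(1) H1F0] H1(2) by auto
    define z where "z = x + t *\<^sub>R y"
    have nz: "\<And>G. nu G \<bullet> z = nu G \<bullet> x + t * (nu G \<bullet> y)" unfolding z_def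
      by (simp add: inner_add_right)
    have zP: "z \<in> P"
    proof (rule hs)
      fix G assume G: "G facet_of P"
      show "nu G \<bullet> z \<ge> -1"
      proof (cases "G = F0")
        case True
        then show ?thesis using nz eta1 kz unfolding k_def \<eta>_def by simp
      next
        case False
        note a = aG[OF G False]
        show ?thesis
        proof (cases "y \<in> G")
          case True
          then have "G \<in> A" using G unfolding A_def by blast
          then have "mn \<le> nu G \<bullet> x" by (rule mnle)
          moreover have "nu G \<bullet> y = -1" using yG[OF G] True by blast
          ultimately show ?thesis using nz[of G] unfolding t_def by simp
        next
          case False
          then have "nu G \<bullet> y \<ge> 0" using bG0[OF G] by blast
          then have "t * (nu G \<bullet> y) \<ge> 0" using tint by simp
          then show ?thesis using nz[of G] a by simp
        qed
      qed
    qed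
    have z1: "nu F0 \<bullet> z = -1" using nz eta1 kz unfolding k_def \<eta>_def by simp
    have z2: "nu H1 \<bullet> z = -1" using nz[of H1] H1(2) yG[OF H1f(1)] H1f(2) unfolding t_def by simp
    have latz: "lattice_pt z" unfolding z_def using lattice_add lattice_scale latx laty tint by blast
    have "z \<in> Lambda P" using two[OF F0(1) H1f(1) H1F0[symmetric] zP z1 z2 latz] .
    moreover have "t *\<^sub>R y \<in> Lambda P" using int_span_int_mult assms(5) tint unfolding Lambda_def by blast
    ultimately have "z - t *\<^sub>R y \<in> Lambda P" unfolding Lambda_def by (rule int_span_diff)
    then show False using assms(3) unfolding z_def by simp
  qed
  define p where "p = k *\<^sub>R x + y"
  have np: "\<And>G. nu G \<bullet> p = k * (nu G \<bullet> x) + nu G \<bullet> y" unfolding p_def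
    by (simp add: inner_add_right)
  have pF0: "\<eta> \<bullet> p = 0" using np[of F0] eta1 unfolding k_def \<eta>_def by simp
  have latp: "lattice_pt p" unfolding p_def using lattice_add lattice_scale latx laty kint by blast
  have exH: "\<exists>H. H facet_of P \<and> H \<noteq> F0 \<and> nu H \<bullet> x = 0 \<and> nu H \<bullet> y = -1"
  proof (rule ccontr)
    assume nH: "\<not> ?thesis"
    have pos: "\<And>G. G facet_of P \<Longrightarrow> nu G \<bullet> p \<ge> 0"
    proof -
      fix G assume G: "G facet_of P"
      show "nu G \<bullet> p \<ge> 0"
      proof (cases "G = F0")
        case True then show ?thesis using pF0 unfolding \<eta>_def by simp
      next
        case False
        note a = aG[OF G False]
        show ?thesis
        proof (cases "nu G \<bullet> x = 0")
          case True
          then have "nu G \<bullet> y \<noteq> -1" using nH G False by blast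
          then have "nu G \<bullet> y \<ge> 0" using bG[OF G] int_gt_m1 by force
          then show ?thesis using np[of G] True by simp
        next
          case nz: False
          then have "nu G \<bullet> x \<ge> 1" using a int_gt_0 by force
          then have "k * (nu G \<bullet> x) \<ge> 1 * 1" using k1 by (intro mult_mono) auto
          then show ?thesis using np[of G] bG[OF G] by simp
        qed
      qed
    qed
    have "p = 0"
    proof (rule bounded_ray_zero[OF bdP])
      fix s :: real assume s: "s \<ge> 0"
      show "s *\<^sub>R p \<in> P"
      proof (rule hs)
        fix G assume G: "G facet_of P"
        have "s * (nu G \<bullet> p) \<ge> 0" using s pos[OF G] by simp
        then show "nu G \<bullet> (s *\<^sub>R p) \<ge> -1" by simp
      qed
    qed
    then have yx: "y = - (k *\<^sub>R x)" unfolding p_def by (simp add: add_eq_0_iff)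
    have "nu H0 \<bullet> y = -1" using yG[OF H0(1)] H0(2) by blast
    then have ka: "k * (nu H0 \<bullet> x) = 1" using yx by simp
    note a0 = aG[OF H0(1) H0F0]
    have "k = 1"
    proof (rule ccontr)
      assume "k \<noteq> 1"
      then have "k \<ge> 2" using k1 kint by (elim Ints_cases) auto
      moreover have "nu H0 \<bullet> x \<ge> 1" using a0 ka int_gt_0 by force
      ultimately have "k * (nu H0 \<bullet> x) \<ge> 2 * 1" by (intro mult_mono) auto
      then show False using ka by simp
    qed
    then have "x = 0 - y" using yx by simp
    then have "x \<in> Lambda P" using int_span_diff[OF int_span_zero assms(5)[unfolded Lambda_def]]
      unfolding Lambda_def by simp
    then show False using assms(3) by blast
  qed
  then obtain H where H: "H facet_of P" "H \<noteq> F0" "nu H \<bullet> x = 0" "nu H \<bullet> y = -1" by blast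
  have pP: "p \<in> P"
  proof (rule hs)
    fix G assume G: "G facet_of P"
    show "nu G \<bullet> p \<ge> -1"
    proof (cases "G = F0")
      case True then show ?thesis using pF0 unfolding \<eta>_def by simp
    next
      case False
      then have "k * (nu G \<bullet> x) \<ge> 0" using aG[OF G] k0 by simp
      then show ?thesis using np[of G] bG[OF G] by simp
    qed
  qed
  have pH: "nu H \<bullet> p = -1" using np[of H] H by simp
  have pHin: "p \<in> H" using nuP[OF H(1)] pP pH by blast
  have px: "p + x \<in> Lambda P"
  proof -
    have npx: "\<And>G. nu G \<bullet> (p + x) = nu G \<bullet> p + nu G \<bullet> x" by (simp add: inner_add_right)
    have "p + x \<in> P"
    proof (rule hs)
      fix G assume G: "G facet_of P"
      show "nu G \<bullet> (p + x) \<ge> -1"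
      proof (cases "G = F0")
        case True then show ?thesis using pF0 npx eta1 unfolding \<eta>_def by simp
      next
        case False
        then have "k * (nu G \<bullet> x) \<ge> 0" using aG[OF G] k0 by simp
        then show ?thesis using npx[of G] np[of G] bG[OF G] aG[OF G False] by simp
      qed
    qed
    moreover have "nu F0 \<bullet> (p + x) = -1" using npx pF0 eta1 unfolding \<eta>_def by simp
    moreover have "nu H \<bullet> (p + x) = -1" using npx pH H(3) by simp
    moreover have "lattice_pt (p + x)" using lattice_add latp latx by blast
    ultimately show ?thesis using two[OF F0(1) H(1) H(2)[symmetric]] by blast
  qed
  have uniq: "\<And>G. G facet_of P \<Longrightarrow> p \<in> G \<Longrightarrow> G = H"
  proof (rule ccontr)
    fix G assume G: "G facet_of P" "p \<in> G" "G \<noteq> H"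
    have "nu G \<bullet> p = -1" using nuP[OF G(1)] G(2) by blast
    then have "p \<in> Lambda P" using two[OF G(1) H(1) G(3) pP _ pH latp] by blast
    then have "(p + x) - p \<in> Lambda P" using px unfolding Lambda_def by (intro int_span_diff)
    then show False using assms(3) by simp
  qed
  have pri: "p \<in> rel_interior H" using unique_facet_rel_interior[OF R H(1) pHin uniq] .
  have proot: "p \<in> roots P" unfolding roots_def using latp pri H(1) by blast
  have pnL: "p \<notin> Lambda P"
  proof
    assume "p \<in> Lambda P"
    then have "(p + x) - p \<in> Lambda P" using px unfolding Lambda_def by (intro int_span_diff)
    then show False using assms(3) by simp
  qed
  have fp: "facet_at P p = H" using facet_at_eq[OF H(1) pHin uniq] .
  have etap: "eta P p \<bullet> x = 0" unfolding eta_def fp using H(3) unfolding nu_def .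
  have "eta P x \<bullet> y = k" unfolding etax k_def \<eta>_def ..
  then show ?thesis using k1 proot pnL etap pF0 unfolding p_def Let_def etax \<eta>_def by simp
qed

end
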